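(* Let $(k,p,\mathcal{A}_{k,p})$ be one of the following: $k=1,p=3$: $\mathcal{A}_{1,3}=\{3r,3r+1:0\le r\le16\}\setminus\{7,16,24,25,34,43\}$; $k=1,p=5$: $\mathcal{A}_{1,5}=(\{5r,5r+1,5r+2,5r+3:0\le r\le 9\}\cup\{50\})\setminus\{23,48\}$; $k=1,p=7$: $\mathcal{A}_{1,7}=([0,50]\cap\mathbb{Z})\setminus\{6,13,20,27,34,41,47,48\}$; $k=2,p=5$: $\mathcal{A}_{2,5}=(\{5r,5r+1,5r+2:0\le r\le 8\}\cup\{45,50\})\setminus\{21,22\}$; $k=2,p=7$: $\mathcal{A}_{2,7}=([0,50]\cap\mathbb{Z})\setminus(\{7r-1,7r-2:1\le r\le 7\}\cup\{45,46\})$; $k=3,p=5$: $\mathcal{A}_{3,5}=\{0,1,5,6,10,11,15,25,26,30,31,35,36,40,50\}$; $k=3,p=7$: $\mathcal{A}_{3,7}=\{7r,7r+1,7r+2,7r+3:0\le r\le 5\}\cup\{42,49,50\}$; $k=4,p=7$: $\mathcal{A}_{4,7}=\{7r,7r+1,7r+2:0\le r\le 4\}\cup\{35,36,49,50\}$; $k=5,p=7$: $\mathcal{A}_{5,7}=\{0,1,7,8,14,15,21,22,28,49,50\}$. Let $n\ge 2k$ and $a\in\mathcal{A}_{k,p}$. If $p\mid\prod_{i=1}^k(a+n-k+i)$ and $p\nmid a_0a_n$, then $f_{n,a}(x)$ has no factor of degree $k$ in $\mathbb{Q}[x]$. If $p\mid\prod_{i=1}^k(n-k+i)(a+n-k+i)$,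 then $L_n^{(a)}(x)$ has no factor of degree $k$ in $\mathbb{Q}[x]$.
   Context: For integers $n\ge 1$, $a\ge 0$ and integers $a_0,\dots,a_n$, $f_{n,a}(x)=\sum_{j=0}^{n} a_j\frac{x^j}{(j+a)!}$. The generalised Laguerre polynomial is $L_n^{(\alpha)}(x)=\sum_{j=0}^{n}\frac{(n+\alpha)(n-1+\alpha)\cdots(j+1+\alpha)}{(n-j)!\,j!}(-x)^j$. *)

theory Defs
  imports "HOL-Computational_Algebra.Polynomial"
begin

definition fpoly :: "(nat \<Rightarrow> int) \<Rightarrow> nat \<Rightarrow> nat \<Rightarrow> rat poly" where
  "fpoly c n a = (\<Sum>j\<le>n. monom (of_int (c j) / fact (j + a)) j)"

definition laguerre :: "nat \<Rightarrow> nat \<Rightarrow> rat poly" where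
  "laguerre n a = (\<Sum>j\<le>n. monom ((-1) ^ j * (\<Prod>i\<in>{j+1..n}. of_nat (i + a))
                                   / (fact (n - j) * fact j)) j)"

definition has_factor_of_degree :: "rat poly \<Rightarrow> nat \<Rightarrow> bool" where
  "has_factor_of_degree f k \<longleftrightarrow> (\<exists>g :: rat poly. degree g = k \<and> g dvd f)"

definition A_set :: "nat \<Rightarrow> nat \<Rightarrow> nat set" where
  "A_set k p =
    (if k = 1 \<and> p = 3 then
       {m. \<exists>r\<le>16. m = 3*r \<or> m = 3*r+1} - {7,16,24,25,34,43}
     else if k = 1 \<and> p = 5 then
       ({m. \<exists>r\<le>9. m = 5*r \<or> m = 5*r+1 \<or> m = 5*r+2 \<or> m = 5*r+3} \<union> {50}) - {23,48}
     else if k = 1 \<and> p = 7 then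
       {0..50} - {6,13,20,27,34,41,47,48}
     else if k = 2 \<and> p = 5 then
       ({m. \<exists>r\<le>8. m = 5*r \<or> m = 5*r+1 \<or> m = 5*r+2} \<union> {45,50}) - {21,22}
     else if k = 2 \<and> p = 7 then
       {0..50} - ({m. \<exists>r\<in>{1..7}. m = 7*r-1 \<or> m = 7*r-2} \<union> {45,46})
     else if k = 3 \<and> p = 5 then
       {0,1,5,6,10,11,15,25,26,30,31,35,36,40,50}
     else if k = 3 \<and> p = 7 then
       {m. \<exists>r\<le>5. m = 7*r \<or> m = 7*r+1 \<or> m = 7*r+2 \<or> m = 7*r+3} \<union> {42,49,50}
     else if k = 4 \<and> p = 7 then
       {m. \<exists>r\<le>4. m = 7*r \<or> m = 7*r+1 \<or> m = 7*r+2} \<union> {35,36,49,50}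
     else if k = 5 \<and> p = 7 then
       {0,1,7,8,14,15,21,22,28,49,50}
     else {})"

end

theory Submission
  imports Defs "HOL-Computational_Algebra.Computational_Algebra" "Berlekamp_Zassenhaus.Factorize_Rat_Poly"
begin


lemma p_dvd_g0:
  fixes G H :: "int poly" and P :: int
  assumes pr: "prime P" and GH: "G \<noteq> 0" "H \<noteq> 0"
    and lc: "\<not> P dvd coeff H (degree H)"
    and low: "\<forall>j\<le>degree H. P dvd coeff (G*H) j"
  shows "P dvd coeff G 0"
proof (rule ccontr)
  assume g0: "\<not> P dvd coeff G 0"
  define t where "t = (LEAST t. \<not> P dvd coeff H t)"
  have tH: "\<not> P dvd coeff H t" unfolding t_def by (rule LeastI[of _ "degree H"]) (rule lc)
  have tle: "t \<le> degree H" unfolding t_def by (rule Least_le) (rule lc)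
  have below: "P dvd coeff H i" if "i < t" for i
    using not_less_Least[of i "\<lambda>t. \<not> P dvd coeff H t"] that unfolding t_def by blast
  have "coeff (G*H) t = (\<Sum>i\<le>t. coeff G i * coeff H (t - i))" by (rule coeff_mult)
  also have "\<dots> = coeff G 0 * coeff H t + (\<Sum>i\<in>{1..t}. coeff G i * coeff H (t - i))"
  proof -
    have "{..t} = insert 0 {1..t}" by auto
    then show ?thesis by simp
  qed
  finally have eq: "coeff (G*H) t = coeff G 0 * coeff H t + (\<Sum>i\<in>{1..t}. coeff G i * coeff H (t - i))" .
  have "P dvd (\<Sum>i\<in>{1..t}. coeff G i * coeff H (t - i))"
  proof (rule dvd_sum)
    fix i assume "i \<in> {1..t}"
    then have "t - i < t" by auto
    then show "P dvd coeff G i * coeff H (t - i)" using below by (simp add: dvd_mult)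
  qed
  moreover have "P dvd coeff (G*H) t" using low tle by auto
  ultimately have "P dvd coeff (G*H) t - (\<Sum>i\<in>{1..t}. coeff G i * coeff H (t - i))" by (intro dvd_diff)
  then have "P dvd coeff G 0 * coeff H t" using eq by simp
  then show False using pr g0 tH prime_dvd_mult_iff by blast
qed



lemma min_max_index:
  fixes w :: "nat \<Rightarrow> nat" and S :: "nat set"
  assumes "finite S" "S \<noteq> {}"
  obtains i0 where "i0 \<in> S" "\<forall>i\<in>S. w i0 \<le> w i" "\<forall>i\<in>S. i > i0 \<longrightarrow> w i0 < w i"
proof -
  define m where "m = Min (w ` S)"
  define I where "I = {i\<in>S. w i = m}"
  have mS: "m \<in> w ` S" unfolding m_def using assms by simp
  have mle: "\<forall>i\<in>S. m \<le> w i" unfolding m_def using assms by simp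
  have fI: "finite I" "I \<noteq> {}" unfolding I_def using assms mS by auto
  define i0 where "i0 = Max I"
  have i0I: "i0 \<in> I" unfolding i0_def using fI by simp
  have "\<forall>i\<in>S. i > i0 \<longrightarrow> w i0 < w i"
  proof (intro ballI impI)
    fix i assume iS: "i \<in> S" and gt: "i > i0"
    have "i \<notin> I"
    proof
      assume "i \<in> I" then have "i \<le> i0" unfolding i0_def using fI(1) by simp
      then show False using gt by simp
    qed
    then have "w i \<noteq> m" using iS unfolding I_def by auto
    moreover have "m \<le> w i" using mle iS by blast
    moreover have "w i0 = m" using i0I unfolding I_def by blast
    ultimately show "w i0 < w i" by linarith
  qed
  moreover have "i0 \<in> S" "w i0 = m" using i0I unfolding I_def by auto
  ultimately show ?thesis using that[of i0] mle by auto
qed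

lemma weight_contra:
  fixes G H :: "int poly" and P :: int and k :: nat
  assumes pr: "prime P" and k: "k \<ge> 1" and dG: "degree G = k" and H: "H \<noteq> 0"
    and lcG: "\<not> P dvd coeff G k"
    and g0: "P dvd coeff G 0"
    and F0: "coeff (G*H) 0 \<noteq> 0"
    and cond: "\<forall>j. 1 \<le> j \<longrightarrow> j \<le> degree (G*H) \<longrightarrow> coeff (G*H) j \<noteq> 0 \<longrightarrow>
        k * multiplicity P (coeff (G*H) 0) < k * multiplicity P (coeff (G*H) j) + j"
  shows False
proof -
  let ?v = "multiplicity P"
  define wG where "wG i = k * ?v (coeff G i) + i" for i
  define wH where "wH i = k * ?v (coeff H i) + i" for i
  define SG where "SG = {i. i \<le> k \<and> coeff G i \<noteq> 0}"
  define SH where "SH = {i. i \<le> degree H \<and> coeff H i \<noteq> 0}"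
  have G: "G \<noteq> 0" using lcG by auto
  have c00: "coeff G 0 \<noteq> 0" "coeff H 0 \<noteq> 0" using F0 by (auto simp: coeff_mult)
  have kSG: "k \<in> SG" unfolding SG_def using lcG by auto
  have SGf: "finite SG" "SG \<noteq> {}" unfolding SG_def using kSG SG_def by auto
  have SHf: "finite SH" "SH \<noteq> {}" unfolding SH_def using H by (auto intro!: exI[of _ "degree H"])
  obtain i0 where i0: "i0 \<in> SG" "\<forall>i\<in>SG. wG i0 \<le> wG i" "\<forall>i\<in>SG. i > i0 \<longrightarrow> wG i0 < wG i"
    using min_max_index[OF SGf, of wG] by blast
  obtain j0 where j0: "j0 \<in> SH" "\<forall>i\<in>SH. wH j0 \<le> wH i" "\<forall>i\<in>SH. i > j0 \<longrightarrow> wH j0 < wH i"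
    using min_max_index[OF SHf, of wH] by blast
  have P0: "P \<noteq> 0" "\<not> is_unit P" using pr by (metis not_prime_0, metis not_prime_unit)
  have vg0: "?v (coeff G 0) \<ge> 1"
    using g0 c00 multiplicity_gt_zero_iff[OF c00(1) P0(2)] by simp
  have vgk: "?v (coeff G k) = 0" using lcG by (rule not_dvd_imp_multiplicity_0)
  have i0pos: "i0 \<ge> 1"
  proof (rule ccontr)
    assume "\<not> i0 \<ge> 1" then have "i0 = 0" by simp
    then have "wG 0 < wG k" using i0(3) kSG k by auto
    then show False using vg0 vgk unfolding wG_def by simp
  qed
  define s where "s = i0 + j0"
  define e where "e = ?v (coeff G i0) + ?v (coeff H j0)"
  have gi0: "coeff G i0 \<noteq> 0" "i0 \<le> k" using i0(1) unfolding SG_def by auto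
  have hj0: "coeff H j0 \<noteq> 0" "j0 \<le> degree H" using j0(1) unfolding SH_def by auto
  have dF: "degree (G*H) = k + degree H" using G H dG by (simp add: degree_mult_eq)
  have main: "\<not> P ^ (e+1) dvd coeff G i0 * coeff H j0"
  proof
    assume "P ^ (e+1) dvd coeff G i0 * coeff H j0"
    then have "e + 1 \<le> ?v (coeff G i0 * coeff H j0)"
      using multiplicity_geI[of "coeff G i0 * coeff H j0" P] gi0 hj0 P0 by auto
    also have "\<dots> = e" unfolding e_def using prime_elem_multiplicity_mult_distrib[OF prime_imp_prime_elem[OF pr]] gi0 hj0 by simp
    finally show False by simp
  qed
  have other: "P ^ (e+1) dvd coeff G i * coeff H (s - i)" if "i \<le> s" "i \<noteq> i0" for i
  proof (cases "coeff G i = 0 \<or> coeff H (s - i) = 0")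
    case True then show ?thesis by auto
  next
    case False
    then have gi: "coeff G i \<noteq> 0" and hi: "coeff H (s - i) \<noteq> 0" by auto
    have iSG: "i \<in> SG" unfolding SG_def using gi dG by (auto intro: le_degree)
    have jSH: "s - i \<in> SH" unfolding SH_def using hi by (auto intro: le_degree)
    have "wG i0 + wH j0 < wG i + wH (s - i)"
    proof (cases "i > i0")
      case True
      then show ?thesis using i0(3) iSG j0(2) jSH by (meson add_less_le_mono)
    next
      case False
      then have "s - i > j0" using that unfolding s_def by auto
      then show ?thesis using j0(3) jSH i0(2) iSG by (meson add_le_less_mono)
    qed
    then have "k * e < k * (?v (coeff G i) + ?v (coeff H (s - i)))"
      using that unfolding wG_def wH_def e_def s_def by (simp add: algebra_simps)
    then have "e + 1 \<le> ?v (coeff G i) + ?v (coeff H (s - i))"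
      by (metis Suc_eq_plus1 less_eq_Suc_le mult_less_cancel1)
    also have "\<dots> = ?v (coeff G i * coeff H (s - i))"
      using prime_elem_multiplicity_mult_distrib[OF prime_imp_prime_elem[OF pr]] gi hi by simp
    finally show ?thesis by (rule multiplicity_dvd')
  qed
  have Fs: "coeff (G*H) s = coeff G i0 * coeff H j0 + (\<Sum>i\<in>{..s} - {i0}. coeff G i * coeff H (s - i))"
  proof -
    have "coeff (G*H) s = (\<Sum>i\<in>{..s}. coeff G i * coeff H (s - i))" by (rule coeff_mult)
    also have "\<dots> = coeff G i0 * coeff H (s - i0) + (\<Sum>i\<in>{..s} - {i0}. coeff G i * coeff H (s - i))"
      by (subst sum.remove[of _ i0]) (auto simp: s_def)
    finally show ?thesis by (simp add: s_def)
  qed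
  have sumdvd: "P ^ (e+1) dvd (\<Sum>i\<in>{..s} - {i0}. coeff G i * coeff H (s - i))"
    by (rule dvd_sum) (use other in auto)
  have ndvd: "\<not> P ^ (e+1) dvd coeff (G*H) s"
  proof
    assume "P ^ (e+1) dvd coeff (G*H) s"
    then have "P ^ (e+1) dvd coeff (G*H) s - (\<Sum>i\<in>{..s} - {i0}. coeff G i * coeff H (s - i))"
      using sumdvd by (intro dvd_diff)
    then show False using main Fs by simp
  qed
  then have Fsnz: "coeff (G*H) s \<noteq> 0" by auto
  have vFs: "?v (coeff (G*H) s) \<le> e"
    using multiplicity_dvd'[of "e+1" P "coeff (G*H) s"] ndvd by linarith
  have "k * ?v (coeff (G*H) 0) < k * ?v (coeff (G*H) s) + s"
    using cond Fsnz i0pos gi0 hj0 dF unfolding s_def by auto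
  also have "\<dots> \<le> k * e + s" using vFs by simp
  also have "\<dots> = wG i0 + wH j0" unfolding wG_def wH_def e_def s_def by (simp add: algebra_simps)
  also have "\<dots> \<le> wG 0 + wH 0"
    using i0(2) j0(2) c00 unfolding SG_def SH_def by (intro add_mono) auto
  also have "\<dots> = k * ?v (coeff (G*H) 0)"
    unfolding wG_def wH_def using prime_elem_multiplicity_mult_distrib[OF prime_imp_prime_elem[OF pr]] c00
    by (simp add: coeff_mult algebra_simps)
  finally show False by simp
qed



fun ds :: "nat \<Rightarrow> nat \<Rightarrow> nat" where
  "ds p m = (if p \<le> 1 \<or> m = 0 then 0 else m mod p + ds p (m div p))"

declare ds.simps[simp del]

lemma ds_eq: "p > 1 \<Longrightarrow> ds p m = m mod p + ds p (m div p)"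
  by (cases "m = 0") (simp_all add: ds.simps)

lemma ds_0 [simp]: "ds p 0 = 0" by (simp add: ds.simps)
lemma ds_Suc [simp]: "p > 1 \<Longrightarrow> ds p (Suc m) = Suc m mod p + ds p (Suc m div p)"
  by (rule ds_eq)
lemma ds_num [simp]: "p > 1 \<Longrightarrow> ds p (numeral w) = numeral w mod p + ds p (numeral w div p)"
  by (rule ds_eq)

lemma ds_pos: "p > 1 \<Longrightarrow> m > 0 \<Longrightarrow> ds p m \<ge> 1"
proof (induction m rule: less_induct)
  case (less m)
  show ?case
  proof (cases "m mod p = 0")
    case False then show ?thesis using ds_eq[OF less.prems(1), of m] by simp
  next
    case True
    then have "m div p > 0" "m div p < m" using less.prems
      by (auto simp: div_greater_zero_iff intro!: div_less_dividend)
    then show ?thesis using less.IH[of "m div p"] less.prems ds_eq[OF less.prems(1), of m] by simp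
  qed
qed

lemma mod_div_aux: "r < (p::nat) \<Longrightarrow> (p*x + r) mod p = r \<and> (p*x + r) div p = x"
  by (metis add.commute div_mult_self2 div_less mod_less mod_mult_self2 not_less0 add_0 mult.commute)

lemma ds_step:
  assumes p: "prime p"
  shows "(p - 1) * multiplicity p (Suc m) + ds p (Suc m) = ds p m + 1"
  using assms
proof (induction m rule: less_induct)
  case (less m)
  have p1: "p > 1" using p prime_gt_1_nat by blast
  show ?case
  proof (cases "p dvd Suc m")
    case False
    then have v0: "multiplicity p (Suc m) = 0" by (rule not_dvd_imp_multiplicity_0)
    have "Suc m mod p \<noteq> 0" using False by (simp add: dvd_eq_mod_eq_0)
    then have "Suc m mod p = Suc (m mod p) \<and> Suc m div p = m div p"
      using p1 by (metis Suc_eq_plus1 add.commute mod_Suc div_Suc)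
    then show ?thesis using v0 ds_eq[OF p1, of m] ds_eq[OF p1, of "Suc m"] by simp
  next
    case True
    then obtain q where q: "Suc m = p * q" by blast
    have q0: "q > 0" using q by (cases q) auto
    have mq: "m = p * (q - 1) + (p - 1)" using q q0 p1
      by (cases q) (auto simp: algebra_simps)
    have "q - 1 \<le> p * (q - 1)" using p1 by simp
    then have lt: "q - 1 < m" using mq p1 by linarith
    have IH: "(p - 1) * multiplicity p q + ds p q = ds p (q - 1) + 1"
      using less.IH[OF lt p] q0 by simp
    have vm: "multiplicity p (Suc m) = Suc (multiplicity p q)"
      using multiplicity_times_same[of q p] p1 q0 unfolding q by simp
    have dsm: "ds p m = (p - 1) + ds p (q - 1)"
      using ds_eq[OF p1, of m] mod_div_aux[of "p - 1" p "q - 1"] mq p1 by simp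
    have dsS: "ds p (Suc m) = ds p q"
      using ds_eq[OF p1, of "Suc m"] q p1 by simp
    have "(p - 1) * multiplicity p (Suc m) = (p - 1) + (p - 1) * multiplicity p q"
      unfolding vm by (rule mult_Suc_right)
    then show ?thesis using IH dsm dsS by linarith
  qed
qed

lemma ds_tele:
  assumes p: "prime p"
  shows "(p - 1) * (\<Sum>i=1..j. multiplicity p (a + i)) + ds p (a + j) = j + ds p a"
proof (induction j)
  case 0 then show ?case by simp
next
  case (Suc j)
  have "(p - 1) * (\<Sum>i=1..Suc j. multiplicity p (a + i)) + ds p (a + Suc j)
      = (p - 1) * (\<Sum>i=1..j. multiplicity p (a + i)) + ((p - 1) * multiplicity p (Suc (a + j)) + ds p (Suc (a + j)))"
    by (simp add: algebra_simps)
  also have "\<dots> = (p - 1) * (\<Sum>i=1..j. multiplicity p (a + i)) + ds p (a + j) + 1"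
    using ds_step[OF p, of "a + j"] by simp
  also have "\<dots> = Suc j + ds p a" using Suc by simp
  finally show ?case .
qed

definition good :: "nat \<Rightarrow> nat \<Rightarrow> nat \<Rightarrow> nat \<Rightarrow> bool" where
  "good k p J a \<longleftrightarrow> k * ds p a < (p - 1 - k) * J + k \<and>
     (\<forall>j\<in>{1..<J}. k * (j + ds p a) < (p - 1) * j + k * ds p (a + j))"

lemma good_imp:
  assumes p: "prime p" and g: "good k p J a" and j: "j \<ge> 1" and kp: "k < p - 1"
  shows "k * (\<Sum>i=1..j. multiplicity p (a + i)) < j"
proof -
  let ?S = "\<Sum>i=1..j. multiplicity p (a + i)"
  have p1: "p > 1" using p prime_gt_1_nat by blast
  have T: "(p - 1) * ?S + ds p (a + j) = j + ds p a" by (rule ds_tele[OF p])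
  have key: "k * (j + ds p a) < (p - 1) * j + k * ds p (a + j)"
  proof (cases "j < J")
    case True
    then show ?thesis using g j unfolding good_def by auto
  next
    case False
    define d where "d = p - 1 - k"
    have pd: "p - 1 = d + k" unfolding d_def using kp by simp
    have "ds p (a + j) \<ge> 1" using ds_pos[OF p1] j by simp
    then have A: "k \<le> k * ds p (a + j)" by simp
    have B: "d * J \<le> d * j" using False by simp
    have C: "k * ds p a < d * J + k" using g unfolding good_def d_def by simp
    have "k * (j + ds p a) = k * j + k * ds p a" by (simp add: algebra_simps)
    moreover have "(p - 1) * j = d * j + k * j" unfolding pd by (simp add: algebra_simps)
    ultimately show ?thesis using A B C by linarith
  qed
  have "(p - 1) * (k * ?S) + k * ds p (a + j) = k * (j + ds p a)"
    using arg_cong[OF T, of "\<lambda>x. k * x"] by (simp add: algebra_simps)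
  then have "(p - 1) * (k * ?S) < (p - 1) * j" using key by linarith
  then show ?thesis by simp
qed




lemma A13: "a \<in> A_set 1 3 \<Longrightarrow> good 1 3 5 a"
proof -
  assume a: "a \<in> A_set 1 3"
  have chk: "\<forall>r\<in>set [0..<17]. \<forall>m\<in>set [3*r, 3*r+1]. m \<notin> {7,16,24,25,34,43} \<longrightarrow> good 1 3 5 m"
    by (simp add: upt_rec good_def atLeastLessThan_nat_numeral)
  from a have "\<exists>r\<in>set [0..<17]. a \<in> set [3*r, 3*r+1]" "a \<notin> {7,16,24,25,34,43}"
    unfolding A_set_def by auto
  then show ?thesis using chk by blast
qed

lemma A15: "a \<in> A_set 1 5 \<Longrightarrow> good 1 5 3 a"
proof -
  assume a: "a \<in> A_set 1 5"
  have chk: "(\<forall>r\<in>set [0..<10]. \<forall>m\<in>set [5*r, 5*r+1, 5*r+2, 5*r+3]. m \<notin> {23,48} \<longrightarrow> good 1 5 3 m)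
     \<and> good 1 5 3 50"
    by (simp add: upt_rec good_def atLeastLessThan_nat_numeral)
  from a have "a = 50 \<or> (\<exists>r\<in>set [0..<10]. a \<in> set [5*r, 5*r+1, 5*r+2, 5*r+3])" "a \<notin> {23,48}"
    unfolding A_set_def by auto
  then show ?thesis using chk by blast
qed

lemma A17: "a \<in> A_set 1 7 \<Longrightarrow> good 1 7 2 a"
proof -
  assume a: "a \<in> A_set 1 7"
  have chk: "\<forall>a\<in>set [0..<51]. a \<notin> {6,13,20,27,34,41,47,48} \<longrightarrow> good 1 7 2 a"
    by (simp add: upt_rec good_def atLeastLessThan_nat_numeral)
  from a have "a \<in> set [0..<51]" "a \<notin> {6,13,20,27,34,41,47,48}"
    unfolding A_set_def by auto
  then show ?thesis using chk by blast
qed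

lemma A25: "a \<in> A_set 2 5 \<Longrightarrow> good 2 5 6 a"
proof -
  assume a: "a \<in> A_set 2 5"
  have chk: "(\<forall>r\<in>set [0..<9]. \<forall>m\<in>set [5*r, 5*r+1, 5*r+2]. m \<notin> {21,22} \<longrightarrow> good 2 5 6 m)
     \<and> good 2 5 6 45 \<and> good 2 5 6 50"
    by (simp add: upt_rec good_def atLeastLessThan_nat_numeral)
  from a have "a = 45 \<or> a = 50 \<or> (\<exists>r\<in>set [0..<9]. a \<in> set [5*r, 5*r+1, 5*r+2])" "a \<notin> {21,22}"
    unfolding A_set_def by auto
  then show ?thesis using chk by blast
qed

lemma A27: "a \<in> A_set 2 7 \<Longrightarrow> good 2 7 5 a"
proof -
  assume a: "a \<in> A_set 2 7"
  have chk: "\<forall>a\<in>set [0..<51]. a \<notin> {45,46} \<longrightarrow> (\<forall>r\<in>set [1..<8]. a \<noteq> 7*r-1 \<and> a \<noteq> 7*r-2) \<longrightarrow> good 2 7 5 a"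
    by (simp add: upt_rec good_def atLeastLessThan_nat_numeral)
  from a have "a \<in> set [0..<51]" "a \<notin> {45,46}" "\<forall>r\<in>set [1..<8]. a \<noteq> 7*r-1 \<and> a \<noteq> 7*r-2"
    unfolding A_set_def by auto
  then show ?thesis using chk by blast
qed

lemma A35: "a \<in> A_set 3 5 \<Longrightarrow> good 3 5 10 a"
proof -
  assume a: "a \<in> A_set 3 5"
  have chk: "\<forall>a\<in>set [0,1,5,6,10,11,15,25,26,30,31,35,36,40,50]. good 3 5 10 a" by (simp add: upt_rec good_def atLeastLessThan_nat_numeral)
  from a have "a \<in> set [0,1,5,6,10,11,15,25,26,30,31,35,36,40,50]" unfolding A_set_def by simp
  then show ?thesis using chk by blast
qed

lemma A37: "a \<in> A_set 3 7 \<Longrightarrow> good 3 7 8 a"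
proof -
  assume a: "a \<in> A_set 3 7"
  have chk: "(\<forall>r\<in>set [0..<6]. \<forall>m\<in>set [7*r, 7*r+1, 7*r+2, 7*r+3]. good 3 7 8 m)
     \<and> (\<forall>m\<in>set [42,49,50]. good 3 7 8 m)"
    by (simp add: upt_rec good_def atLeastLessThan_nat_numeral)
  from a have "a \<in> set [42,49,50] \<or> (\<exists>r\<in>set [0..<6]. a \<in> set [7*r, 7*r+1, 7*r+2, 7*r+3])"
    unfolding A_set_def by auto
  then show ?thesis using chk by blast
qed

lemma A47: "a \<in> A_set 4 7 \<Longrightarrow> good 4 7 11 a"
proof -
  assume a: "a \<in> A_set 4 7"
  have chk: "(\<forall>r\<in>set [0..<5]. \<forall>m\<in>set [7*r, 7*r+1, 7*r+2]. good 4 7 11 m)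
     \<and> (\<forall>m\<in>set [35,36,49,50]. good 4 7 11 m)"
    by (simp add: upt_rec good_def atLeastLessThan_nat_numeral)
  from a have "a \<in> set [35,36,49,50] \<or> (\<exists>r\<in>set [0..<5]. a \<in> set [7*r, 7*r+1, 7*r+2])"
    unfolding A_set_def by auto
  then show ?thesis using chk by blast
qed

lemma A57: "a \<in> A_set 5 7 \<Longrightarrow> good 5 7 16 a"
proof -
  assume a: "a \<in> A_set 5 7"
  have chk: "\<forall>a\<in>set [0,1,7,8,14,15,21,22,28,49,50]. good 5 7 16 a" by (simp add: upt_rec good_def atLeastLessThan_nat_numeral)
  from a have "a \<in> set [0,1,7,8,14,15,21,22,28,49,50]" unfolding A_set_def by simp
  then show ?thesis using chk by blast
qed

lemma A_valuation:
  assumes kp: "(k, p) \<in> {(1,3), (1,5), (1,7), (2,5), (2,7), (3,5), (3,7), (4,7), (5,7)}"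
    and a: "a \<in> A_set k p" and j: "j \<ge> 1"
  shows "k * (\<Sum>i=1..j. multiplicity p (a + i)) < j"
proof -
  have "(\<exists>J. good k p J a) \<and> prime p \<and> k < p - 1"
    using kp a A13 A15 A17 A25 A27 A35 A37 A47 A57 by (auto; blast)
  then show ?thesis using good_imp j by blast
qed



definition bb :: "nat \<Rightarrow> nat \<Rightarrow> nat \<Rightarrow> nat" where
  "bb n a j = (\<Prod>i\<in>{j+1..n}. i + a)"

lemma fact_bb: "j \<le> n \<Longrightarrow> fact (j + a) * bb n a j = (fact (n + a) :: nat)"
proof (induction n rule: dec_induct)
  case base then show ?case by (simp add: bb_def)
next
  case (step m)
  have "{j+1..Suc m} = insert (Suc m) {j+1..m}" using step by auto
  then have "bb (Suc m) a j = (Suc m + a) * bb m a j" unfolding bb_def by simp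
  then show ?case using step.IH by (simp add: algebra_simps)
qed

lemma bb_nz: "bb n a j \<noteq> 0" unfolding bb_def by auto

lemma bb_n: "bb n a n = 1" unfolding bb_def by simp

lemma mult_bb:
  assumes "prime p"
  shows "multiplicity p (bb n a j) = (\<Sum>i\<in>{j+1..n}. multiplicity p (i + a))"
  unfolding bb_def using assms
  by (intro prime_elem_multiplicity_prod_distrib) auto

lemma mult_int:
  assumes p: "p > 1" and x: "x \<noteq> 0"
  shows "multiplicity (int p) (int x) = multiplicity p x"
proof -
  have nu1: "\<not> is_unit p" using p by simp
  have nu2: "\<not> is_unit (int p)" using p by simp
  have x2: "int x \<noteq> 0" using x by simp
  have eq: "m \<le> multiplicity (int p) (int x) \<longleftrightarrow> m \<le> multiplicity p x" for m
  proof -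
    have "m \<le> multiplicity (int p) (int x) \<longleftrightarrow> int p ^ m dvd int x"
      using power_dvd_iff_le_multiplicity[OF x2 nu2] by simp
    also have "\<dots> \<longleftrightarrow> p ^ m dvd x" by (metis Power.of_nat_power int_dvd_int_iff)
    also have "\<dots> \<longleftrightarrow> m \<le> multiplicity p x"
      using power_dvd_iff_le_multiplicity[OF x nu1] by simp
    finally show ?thesis .
  qed
  show ?thesis using eq[of "multiplicity p x"] eq[of "multiplicity (int p) (int x)"] by linarith
qed

lemma cond_from_A:
  fixes F :: "int poly" and d :: "nat \<Rightarrow> int"
  assumes kp: "(k, p) \<in> {(1,3), (1,5), (1,7), (2,5), (2,7), (3,5), (3,7), (4,7), (5,7)}"
    and a: "a \<in> A_set k p"
    and cF: "\<forall>j\<le>n. coeff F j = d j * int (bb n a j)"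
    and d0: "\<not> int p dvd d 0"
  shows "\<forall>j. 1 \<le> j \<longrightarrow> j \<le> n \<longrightarrow> coeff F j \<noteq> 0 \<longrightarrow>
        k * multiplicity (int p) (coeff F 0) < k * multiplicity (int p) (coeff F j) + j"
proof (intro allI impI)
  fix j assume j1: "1 \<le> j" and jn: "j \<le> n" and nz: "coeff F j \<noteq> 0"
  have pr: "prime p" using kp by auto
  have p1: "p > 1" using pr prime_gt_1_nat by blast
  have pri: "prime (int p)" using pr by simp
  let ?v = "multiplicity (int p)"
  have d0nz: "d 0 \<noteq> 0" using d0 by auto
  have djnz: "d j \<noteq> 0" using nz cF jn by auto
  have "?v (coeff F 0) = ?v (d 0) + ?v (int (bb n a 0))"
    using cF prime_elem_multiplicity_mult_distrib[OF prime_imp_prime_elem[OF pri] d0nz] bb_nz by simp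
  also have "?v (d 0) = 0" using d0 by (rule not_dvd_imp_multiplicity_0)
  also have "?v (int (bb n a 0)) = (\<Sum>i\<in>{1..n}. multiplicity p (i + a))"
    using mult_int[OF p1 bb_nz] mult_bb[OF pr] by simp
  finally have v0: "?v (coeff F 0) = (\<Sum>i\<in>{1..n}. multiplicity p (i + a))" by simp
  have "?v (coeff F j) = ?v (d j) + ?v (int (bb n a j))"
    using cF jn prime_elem_multiplicity_mult_distrib[OF prime_imp_prime_elem[OF pri] djnz] bb_nz by simp
  also have "?v (int (bb n a j)) = (\<Sum>i\<in>{j+1..n}. multiplicity p (i + a))"
    using mult_int[OF p1 bb_nz] mult_bb[OF pr] by simp
  finally have vj: "?v (coeff F j) \<ge> (\<Sum>i\<in>{j+1..n}. multiplicity p (i + a))" by simp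
  have split: "(\<Sum>i\<in>{1..n}. multiplicity p (i + a)) =
      (\<Sum>i\<in>{1..j}. multiplicity p (i + a)) + (\<Sum>i\<in>{j+1..n}. multiplicity p (i + a))"
  proof -
    have "{1..n} = {1..j} \<union> {j+1..n}" using j1 jn by auto
    then show ?thesis by (simp add: sum.union_disjoint)
  qed
  have "k * (\<Sum>i=1..j. multiplicity p (a + i)) < j" by (rule A_valuation[OF kp a j1])
  then have "k * (\<Sum>i\<in>{1..j}. multiplicity p (i + a)) < j" by (simp add: add.commute)
  then show "k * ?v (coeff F 0) < k * ?v (coeff F j) + j"
  proof -
    have "k * (\<Sum>i\<in>{j+1..n}. multiplicity p (i + a)) \<le> k * ?v (coeff F j)"
      using vj by (rule mult_le_mono2)
    moreover have "k * ?v (coeff F 0) = k * (\<Sum>i\<in>{1..j}. multiplicity p (i + a)) + k * (\<Sum>i\<in>{j+1..n}. multiplicity p (i + a))"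
      unfolding v0 split by (rule distrib_left)
    ultimately show ?thesis using \<open>k * (\<Sum>i\<in>{1..j}. multiplicity p (i + a)) < j\<close> by linarith
  qed
qed


lemma no_factor_main:
  fixes F :: "int poly" and f :: "rat poly" and d :: "nat \<Rightarrow> int" and r :: rat
  assumes kp: "(k, p) \<in> {(1,3), (1,5), (1,7), (2,5), (2,7), (3,5), (3,7), (4,7), (5,7)}"
    and a: "a \<in> A_set k p" and nk: "n \<ge> k"
    and cF: "\<forall>j\<le>n. coeff F j = d j * int (bb n a j)" and cF': "\<forall>j>n. coeff F j = 0"
    and d0: "\<not> int p dvd d 0" and dn: "\<not> int p dvd d n"
    and low: "\<forall>j\<le>n-k. int p dvd coeff F j"
    and emb: "of_int_poly F = Polynomial.smult r f" and r: "r \<noteq> 0"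
  shows "\<not> has_factor_of_degree f k"
proof
  assume "has_factor_of_degree f k"
  then obtain g where dg: "degree g = k" "g dvd f" by (auto simp: has_factor_of_degree_def)
  then obtain h where fgh: "f = g * h" by (auto elim: dvdE)
  have "of_int_poly F = g * Polynomial.smult r h" using emb fgh by simp
  from rat_to_int_factor[OF this] obtain G H where GH: "F = G * H" "degree G = degree g" by blast
  have pr: "prime p" and k1: "k \<ge> 1" using kp by auto
  have pri: "prime (int p)" using pr by simp
  have Fn: "coeff F n = d n" using cF bb_n by simp
  have dnz: "d n \<noteq> 0" using dn by auto
  have degF: "degree F = n"
  proof (rule antisym)
    show "degree F \<le> n" using cF' by (intro degree_le) auto
    show "n \<le> degree F" using Fn dnz by (intro le_degree) simp
  qed
  have F0: "F \<noteq> 0" using Fn dnz by auto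
  have G0: "G \<noteq> 0" and H0: "H \<noteq> 0" using F0 GH by auto
  have dGk: "degree G = k" using GH dg by simp
  have dH: "degree H = n - k" using degree_mult_eq[OF G0 H0] GH degF dGk by simp
  have lc: "coeff F n = coeff G k * coeff H (degree H)"
    using coeff_mult_degree_sum[of G H] GH degF dGk dH nk by simp
  have lcG: "\<not> int p dvd coeff G k" and lcH: "\<not> int p dvd coeff H (degree H)"
    using lc Fn dn by (auto simp: dvd_mult dvd_mult2)
  have g0: "int p dvd coeff G 0"
    by (rule p_dvd_g0[OF pri G0 H0 lcH]) (use low GH dH in auto)
  have c0: "coeff (G * H) 0 \<noteq> 0" using cF d0 bb_nz GH by auto
  have cond: "\<forall>j. 1 \<le> j \<longrightarrow> j \<le> degree (G*H) \<longrightarrow> coeff (G*H) j \<noteq> 0 \<longrightarrow>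
        k * multiplicity (int p) (coeff (G*H) 0) < k * multiplicity (int p) (coeff (G*H) j) + j"
    using cond_from_A[OF kp a cF d0] GH degF by simp
  show False by (rule weight_contra[OF pri k1 dGk H0 lcG g0 c0 cond])
qed

lemma coeff_sum_monom: "coeff (\<Sum>j\<le>n. monom (x j) j) i = (if i \<le> n then x i else 0)"
  by (simp add: coeff_sum coeff_monom)

lemma bb_dvd:
  assumes "j \<le> n - k" "1 \<le> i" "i \<le> k" "k \<le> n" "q dvd (n - k + i) + a"
  shows "q dvd bb n a j"
proof -
  have "n - k + i \<in> {j+1..n}" using assms by auto
  then have "(n - k + i) + a dvd bb n a j" unfolding bb_def by (rule dvd_prodI[rotated]) simp
  then show ?thesis using assms(5) dvd_trans by blast
qed

lemma choose_bb: "j \<le> n \<Longrightarrow> (n choose j) * bb n a j = (n + a choose (n - j)) * bb n 0 j"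
proof -
  assume jn: "j \<le> n"
  define X :: nat where "X = fact (n - j) * fact j * fact (j + a)"
  have X0: "X \<noteq> 0" unfolding X_def by simp
  have L: "(n choose j) * bb n a j * X = fact n * (fact (n + a) :: nat)"
  proof -
    have "(n choose j) * bb n a j * X = (fact j * fact (n - j) * (n choose j)) * (fact (j + a) * bb n a j)"
      unfolding X_def by (simp add: algebra_simps)
    also have "\<dots> = fact n * fact (n + a)" using binomial_fact_lemma[OF jn] fact_bb[OF jn] by simp
    finally show ?thesis .
  qed
  have R: "(n + a choose (n - j)) * bb n 0 j * X = fact n * (fact (n + a) :: nat)"
  proof -
    have e: "n + a - (n - j) = j + a" using jn by simp
    have "(n + a choose (n - j)) * bb n 0 j * X =
        (fact (n - j) * fact (n + a - (n - j)) * (n + a choose (n - j))) * (fact (j + 0) * bb n 0 j)"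
      unfolding X_def e by (simp add: algebra_simps)
    also have "\<dots> = fact (n + a) * fact n"
      using binomial_fact_lemma[of "n - j" "n + a"] fact_bb[OF jn, of 0] by simp
    finally show ?thesis by simp
  qed
  have "(n choose j) * bb n a j * X = (n + a choose (n - j)) * bb n 0 j * X" using L R by simp
  then show ?thesis using X0 by simp
qed


lemma fpoly_emb:
  "of_int_poly (\<Sum>j\<le>n. monom (c j * int (bb n a j)) j) = Polynomial.smult (fact (n + a)) (fpoly c n a)"
proof (rule poly_eqI)
  fix i
  show "coeff (of_int_poly (\<Sum>j\<le>n. monom (c j * int (bb n a j)) j)) i =
        coeff (Polynomial.smult (fact (n + a)) (fpoly c n a)) i"
  proof (cases "i \<le> n")
    case True
    have "(fact (n + a) :: rat) = fact (i + a) * of_nat (bb n a i)"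
      using arg_cong[OF fact_bb[OF True, of a], of "of_nat :: nat \<Rightarrow> rat"] by (simp add: of_nat_fact)
    then show ?thesis using True
      by (simp add: coeff_sum_monom fpoly_def of_nat_fact field_simps)
  next
    case False
    then show ?thesis by (simp add: coeff_sum_monom fpoly_def)
  qed
qed

lemma laguerre_emb:
  "of_int_poly (\<Sum>j\<le>n. monom ((-1) ^ j * int (n choose j) * int (bb n a j)) j)
     = Polynomial.smult (fact n) (laguerre n a)"
proof (rule poly_eqI)
  fix i
  show "coeff (of_int_poly (\<Sum>j\<le>n. monom ((-1) ^ j * int (n choose j) * int (bb n a j)) j)) i =
        coeff (Polynomial.smult (fact n) (laguerre n a)) i"
  proof (cases "i \<le> n")
    case True
    have pr: "(\<Prod>j\<in>{i+1..n}. of_nat (j + a) :: rat) = of_nat (bb n a i)"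
      unfolding bb_def by simp
    have "(fact n :: rat) = fact i * fact (n - i) * of_nat (n choose i)"
      using arg_cong[OF binomial_fact_lemma[OF True], of "of_nat :: nat \<Rightarrow> rat"] by (simp add: of_nat_fact)
    then show ?thesis using True pr
      by (simp add: coeff_sum_monom laguerre_def of_nat_fact field_simps)
  next
    case False
    then show ?thesis by (simp add: coeff_sum_monom laguerre_def)
  qed
qed

theorem corollary2p1:
  fixes k p n a :: nat and c :: "nat \<Rightarrow> int"
  assumes kp: "(k, p) \<in> {(1,3), (1,5), (1,7), (2,5), (2,7), (3,5), (3,7), (4,7), (5,7)}"
    and n: "n \<ge> 2 * k"
    and a: "a \<in> A_set k p"
  shows "(p dvd (\<Prod>i=1..k. a + n - k + i) \<and> \<not> int p dvd (c 0 * c n)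
            \<longrightarrow> \<not> has_factor_of_degree (fpoly c n a) k)
       \<and> (p dvd (\<Prod>i=1..k. (n - k + i) * (a + n - k + i))
            \<longrightarrow> \<not> has_factor_of_degree (laguerre n a) k)"
proof (intro conjI impI)
  have pr: "prime p" using kp by auto
  have p1: "p > 1" using pr prime_gt_1_nat by blast
  have nk: "n \<ge> k" using n by simp
  {
    assume H: "p dvd (\<Prod>i=1..k. a + n - k + i) \<and> \<not> int p dvd (c 0 * c n)"
    have "\<exists>i\<in>{1..k}. p dvd a + n - k + i" using H by (simp only: prime_dvd_prod_iff[OF finite_atLeastAtMost pr])
    then obtain i where i: "i \<in> {1..k}" "p dvd a + n - k + i" by blast
    have i': "p dvd (n - k + i) + a" using i nk by (simp add: add.commute add.left_commute)
    define F where "F = (\<Sum>j\<le>n. monom (c j * int (bb n a j)) j)"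
    show "\<not> has_factor_of_degree (fpoly c n a) k"
    proof (rule no_factor_main[OF kp a nk, of F c])
      show "\<forall>j\<le>n. coeff F j = c j * int (bb n a j)" unfolding F_def by (simp add: coeff_sum_monom)
      show "\<forall>j>n. coeff F j = 0" unfolding F_def by (simp add: coeff_sum_monom)
      show "\<not> int p dvd c 0" "\<not> int p dvd c n" using H by (auto simp: dvd_mult dvd_mult2)
      show "\<forall>j\<le>n-k. int p dvd coeff F j"
      proof (intro allI impI)
        fix j assume j: "j \<le> n - k"
        have "p dvd bb n a j" using bb_dvd[OF j _ _ nk i'] i by auto
        then have "int p dvd int (bb n a j)" by simp
        then show "int p dvd coeff F j" using j unfolding F_def by (simp add: coeff_sum_monom)
      qed
      show "of_int_poly F = Polynomial.smult (fact (n + a)) (fpoly c n a)" unfolding F_def by (rule fpoly_emb)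
      show "(fact (n + a) :: rat) \<noteq> 0" by simp
    qed
  }
  {
    assume H: "p dvd (\<Prod>i=1..k. (n - k + i) * (a + n - k + i))"
    have "\<exists>i\<in>{1..k}. p dvd (n - k + i) * (a + n - k + i)" using H by (simp only: prime_dvd_prod_iff[OF finite_atLeastAtMost pr])
    then obtain i where i: "i \<in> {1..k}" "p dvd (n - k + i) * (a + n - k + i)" by blast
    then have i2: "p dvd (n - k + i) + 0 \<or> p dvd (n - k + i) + a"
      using prime_dvd_mult_iff[OF pr] nk by (auto simp: add.commute add.left_commute)
    define F where "F = (\<Sum>j\<le>n. monom ((-1) ^ j * int (n choose j) * int (bb n a j)) j)"
    show "\<not> has_factor_of_degree (laguerre n a) k"
    proof (rule no_factor_main[OF kp a nk, of F "\<lambda>j. (-1) ^ j * int (n choose j)"])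
      show "\<forall>j\<le>n. coeff F j = (-1) ^ j * int (n choose j) * int (bb n a j)"
        unfolding F_def by (simp add: coeff_sum_monom)
      show "\<forall>j>n. coeff F j = 0" unfolding F_def by (simp add: coeff_sum_monom)
      show "\<not> int p dvd (-1) ^ 0 * int (n choose 0)" using p1 by simp
      show "\<not> int p dvd (-1) ^ n * int (n choose n)"
      proof
        assume "int p dvd (-1) ^ n * int (n choose n)"
        moreover have "is_unit ((-1::int) ^ n * int (n choose n))" by simp
        ultimately have "is_unit (int p)" by (rule dvd_unit_imp_unit)
        then show False using p1 by simp
      qed
      show "\<forall>j\<le>n-k. int p dvd coeff F j"
      proof (intro allI impI)
        fix j assume j: "j \<le> n - k"
        have jn: "j \<le> n" using j by simp
        have "p dvd (n choose j) * bb n a j"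
          using i2
        proof
          assume "p dvd (n - k + i) + 0"
          then have "p dvd bb n 0 j" using bb_dvd[OF j _ _ nk] i by auto
          then show ?thesis unfolding choose_bb[OF jn] by simp
        next
          assume "p dvd (n - k + i) + a"
          then have "p dvd bb n a j" using bb_dvd[OF j _ _ nk] i by auto
          then show ?thesis by simp
        qed
        then have "int p dvd int (n choose j) * int (bb n a j)"
          by (metis int_dvd_int_iff of_nat_mult)
        then show "int p dvd coeff F j" using j unfolding F_def
          by (simp add: coeff_sum_monom mult.assoc)
      qed
      show "of_int_poly F = Polynomial.smult (fact n) (laguerre n a)" unfolding F_def by (rule laguerre_emb)
      show "(fact n :: rat) \<noteq> 0" by simp
    qed
  }
qed


end
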